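(* Let $(X,d)$ be a bicomplete quasi-pseudometric space. Let $J:X\to X$ be a continuous single-valued map such that $r\,d(x,y)\le d(Jx,Jy)$ for all $x,y\in X$, for some constant $r>0$. Let $F:X\to CB(X)$ be a set-valued map such that $$H(Fx,Fy)\le \alpha\, d(Jx,Jy)\quad\text{for all }x,y\in X,$$ where $\alpha\in(0,1)$ and $r\alpha<1$. Then there exists a unique $x_0\in X$ which is both a startpoint and an endpoint of $J$ and $F$ if and only if $J$ and $F$ have the approximate mix-point property.
   Context: A quasi-pseudometric on a nonempty set $X$ is a map $d:X\times X\to[0,\infty)$ with $d(x,x)=0$ and $d(x,z)\le d(x,y)+d(y,z)$ for all $x,y,z$; it is $T_0$ if $d(x,y)=0=d(y,x)$ implies $x=y$. Write $d^s(x,y)=\max\{d(x,y),d(y,x)\}$. The space $(X,d)$ is bicomplete if $d$ is $T_0$ and the metric $d^s$ is complete. For $x\in X$ and nonempty $A\subseteq X$: $d(x,A)=\inf_{a\in A}d(x,a)$, $d(A,x)=\inf_{a\in A}d(a,x)$. For nonempty $A,B\subseteq X$: $H(A,B)=\max\{\sup_{a\in A}d(a,B),\ \sup_{b\in B}d(A,b)\}$. $CB(X)$ denotes the family of nonempty $d^s$-bounded, $\tau(d^s)$-closed subsets of $X$; continuity of $J$ is with respect to $\tau(d^s)$. For $J:X\to X$ and $F:X\to 2^X$, a point $x$ is a startpoint of $J$ and $F$ if $H(\{Jx\},Fx)=0$ and an endpoint of $J$ and $F$ if $H(Fx,\{Jx\})=0$. $J$ and $F$ have the approximate mix-point property if $\inf_{x\in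 X}\sup_{y\in Fx}d^s(Jx,y)=0$. *)

theory Defs
  imports Main "HOL.Real"
begin

definition quasi_pseudometric :: "('a \<Rightarrow> 'a \<Rightarrow> real) \<Rightarrow> bool" where
  "quasi_pseudometric d \<longleftrightarrow> (\<forall>x y. 0 \<le> d x y) \<and> (\<forall>x. d x x = 0) \<and>
     (\<forall>x y z. d x z \<le> d x y + d y z)"

definition T0_qpm :: "('a \<Rightarrow> 'a \<Rightarrow> real) \<Rightarrow> bool" where
  "T0_qpm d \<longleftrightarrow> (\<forall>x y. d x y = 0 \<and> d y x = 0 \<longrightarrow> x = y)"

definition sym_dist :: "('a \<Rightarrow> 'a \<Rightarrow> real) \<Rightarrow> 'a \<Rightarrow> 'a \<Rightarrow> real" where
  "sym_dist d x y = max (d x y) (d y x)"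

definition ds_cauchy :: "('a \<Rightarrow> 'a \<Rightarrow> real) \<Rightarrow> (nat \<Rightarrow> 'a) \<Rightarrow> bool" where
  "ds_cauchy d s \<longleftrightarrow> (\<forall>e>0. \<exists>N. \<forall>m\<ge>N. \<forall>n\<ge>N. sym_dist d (s m) (s n) < e)"

definition ds_converges :: "('a \<Rightarrow> 'a \<Rightarrow> real) \<Rightarrow> (nat \<Rightarrow> 'a) \<Rightarrow> 'a \<Rightarrow> bool" where
  "ds_converges d s x \<longleftrightarrow> (\<forall>e>0. \<exists>N. \<forall>n\<ge>N. sym_dist d (s n) x < e)"

definition bicomplete :: "('a \<Rightarrow> 'a \<Rightarrow> real) \<Rightarrow> bool" where
  "bicomplete d \<longleftrightarrow> quasi_pseudometric d \<and> T0_qpm d \<and>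
     (\<forall>s. ds_cauchy d s \<longrightarrow> (\<exists>x. ds_converges d s x))"

definition ds_open :: "('a \<Rightarrow> 'a \<Rightarrow> real) \<Rightarrow> 'a set \<Rightarrow> bool" where
  "ds_open d U \<longleftrightarrow> (\<forall>x\<in>U. \<exists>e>0. \<forall>y. sym_dist d x y < e \<longrightarrow> y \<in> U)"

definition ds_closed :: "('a \<Rightarrow> 'a \<Rightarrow> real) \<Rightarrow> 'a set \<Rightarrow> bool" where
  "ds_closed d A \<longleftrightarrow> ds_open d (- A)"

definition ds_bounded :: "('a \<Rightarrow> 'a \<Rightarrow> real) \<Rightarrow> 'a set \<Rightarrow> bool" where
  "ds_bounded d A \<longleftrightarrow> (\<exists>R. \<forall>a\<in>A. \<forall>b\<in>A. sym_dist d a b \<le> R)"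

definition CB :: "('a \<Rightarrow> 'a \<Rightarrow> real) \<Rightarrow> 'a set set" where
  "CB d = {A. A \<noteq> {} \<and> ds_bounded d A \<and> ds_closed d A}"

definition ds_continuous :: "('a \<Rightarrow> 'a \<Rightarrow> real) \<Rightarrow> ('a \<Rightarrow> 'a) \<Rightarrow> bool" where
  "ds_continuous d J \<longleftrightarrow> (\<forall>U. ds_open d U \<longrightarrow> ds_open d (J -` U))"

definition dist_pt_set :: "('a \<Rightarrow> 'a \<Rightarrow> real) \<Rightarrow> 'a \<Rightarrow> 'a set \<Rightarrow> real" where
  "dist_pt_set d x A = (INF a\<in>A. d x a)"

definition dist_set_pt :: "('a \<Rightarrow> 'a \<Rightarrow> real) \<Rightarrow> 'a set \<Rightarrow> 'a \<Rightarrow> real" where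
  "dist_set_pt d A x = (INF a\<in>A. d a x)"

definition Hqpm :: "('a \<Rightarrow> 'a \<Rightarrow> real) \<Rightarrow> 'a set \<Rightarrow> 'a set \<Rightarrow> real" where
  "Hqpm d A B = max (SUP a\<in>A. dist_pt_set d a B) (SUP b\<in>B. dist_set_pt d A b)"

definition startpoint :: "('a \<Rightarrow> 'a \<Rightarrow> real) \<Rightarrow> ('a \<Rightarrow> 'a) \<Rightarrow> ('a \<Rightarrow> 'a set) \<Rightarrow> 'a \<Rightarrow> bool" where
  "startpoint d J F x \<longleftrightarrow> Hqpm d {J x} (F x) = 0"

definition endpoint :: "('a \<Rightarrow> 'a \<Rightarrow> real) \<Rightarrow> ('a \<Rightarrow> 'a) \<Rightarrow> ('a \<Rightarrow> 'a set) \<Rightarrow> 'a \<Rightarrow> bool" where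
  "endpoint d J F x \<longleftrightarrow> Hqpm d (F x) {J x} = 0"

definition approx_mix_point :: "('a \<Rightarrow> 'a \<Rightarrow> real) \<Rightarrow> ('a \<Rightarrow> 'a) \<Rightarrow> ('a \<Rightarrow> 'a set) \<Rightarrow> bool" where
  "approx_mix_point d J F \<longleftrightarrow> (INF x. SUP y\<in>F x. sym_dist d (J x) y) = 0"

end

theory Submission
  imports Defs
begin

lemma qpm_facts:
  assumes "quasi_pseudometric d"
  shows "0 \<le> d x y" "d x x = 0" "d x z \<le> d x y + d y z"
  using assms unfolding quasi_pseudometric_def by auto

lemma sd_facts:
  assumes "quasi_pseudometric d"
  shows "sym_dist d x y = sym_dist d y x" "d x y \<le> sym_dist d x y" "d y x \<le> sym_dist d x y"
    "0 \<le> sym_dist d x y" "sym_dist d x x = 0"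
    "sym_dist d x z \<le> sym_dist d x y + sym_dist d y z"
proof -
  show "sym_dist d x y = sym_dist d y x" "d x y \<le> sym_dist d x y" "d y x \<le> sym_dist d x y"
    "0 \<le> sym_dist d x y" "sym_dist d x x = 0"
    using qpm_facts[OF assms] by (auto simp: sym_dist_def le_max_iff_disj)
  have "d x z \<le> d x y + d y z" "d z x \<le> d z y + d y x" using qpm_facts[OF assms] by auto
  then show "sym_dist d x z \<le> sym_dist d x y + sym_dist d y z"
    unfolding sym_dist_def by linarith
qed

lemma CB_bdd:
  assumes "quasi_pseudometric d" "A \<in> CB d"
  shows "bdd_above ((\<lambda>a. d p a) ` A)" "bdd_above ((\<lambda>a. d a p) ` A)"
    "bdd_above ((\<lambda>a. sym_dist d p a) ` A)" "A \<noteq> {}"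
proof -
  from assms(2) obtain R a0 where R: "\<forall>a\<in>A. \<forall>b\<in>A. sym_dist d a b \<le> R" and a0: "a0 \<in> A"
    unfolding CB_def ds_bounded_def by auto
  show "A \<noteq> {}" using a0 by auto
  have "\<forall>a\<in>A. sym_dist d p a \<le> sym_dist d p a0 + R"
    using R a0 sd_facts[OF assms(1)] by (meson add_left_mono order_trans)
  then show "bdd_above ((\<lambda>a. sym_dist d p a) ` A)" by (auto intro: bdd_aboveI2)
  then obtain M where M: "\<forall>a\<in>A. sym_dist d p a \<le> M" by (auto simp: bdd_above_def)
  have "\<forall>a\<in>A. d p a \<le> M" "\<forall>a\<in>A. d a p \<le> M"
  proof (safe)
    fix a assume a: "a \<in> A"
    show "d p a \<le> M" using M a sd_facts(2)[OF assms(1), of p a] by fastforce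
    show "d a p \<le> M" using M a sd_facts(3)[OF assms(1), of a p] by fastforce
  qed
  then show "bdd_above ((\<lambda>a. d p a) ` A)" "bdd_above ((\<lambda>a. d a p) ` A)"
    by (auto intro: bdd_aboveI2)
qed

lemma dpt_bdd:
  assumes "quasi_pseudometric d" "A \<in> CB d"
  shows "bdd_below ((\<lambda>a. d p a) ` A)" "bdd_below ((\<lambda>a. d a p) ` A)"
  using qpm_facts(1)[OF assms(1)] by (auto intro!: bdd_belowI2)

lemma H1:
  assumes q: "quasi_pseudometric d" and A: "A \<in> CB d" and B: "B \<in> CB d" and a: "a \<in> A" and e: "e > 0"
  shows "\<exists>b\<in>B. d a b < Hqpm d A B + e"
proof -
  have Bne: "B \<noteq> {}" using CB_bdd[OF q B] by auto
  then obtain b0 where b0: "b0 \<in> B" by auto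
  have "\<forall>x\<in>A. dist_pt_set d x B \<le> d x b0"
    unfolding dist_pt_set_def using cINF_lower[OF dpt_bdd(1)[OF q B] b0] by auto
  moreover have "\<forall>x\<in>A. d x b0 \<le> d a b0 + d x a"
    using qpm_facts[OF q] by (metis add.commute)
  moreover obtain R where "\<forall>x\<in>A. d x a \<le> R" using CB_bdd(2)[OF q A, of a] by (auto simp: bdd_above_def)
  ultimately have "\<forall>x\<in>A. dist_pt_set d x B \<le> d a b0 + R" by (meson add_left_mono order_trans)
  then have bd: "bdd_above ((\<lambda>x. dist_pt_set d x B) ` A)" by (auto intro: bdd_aboveI2)
  have "dist_pt_set d a B \<le> Hqpm d A B"
    unfolding Hqpm_def using cSUP_upper[OF a bd] by linarith
  then have "(INF b\<in>B. d a b) < Hqpm d A B + e" using e unfolding dist_pt_set_def by linarith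
  then show ?thesis using cINF_less_iff[OF Bne dpt_bdd(1)[OF q B]] by auto
qed

lemma H2:
  assumes q: "quasi_pseudometric d" and A: "A \<in> CB d" and B: "B \<in> CB d" and b: "b \<in> B" and e: "e > 0"
  shows "\<exists>a\<in>A. d a b < Hqpm d A B + e"
proof -
  have Ane: "A \<noteq> {}" using CB_bdd[OF q A] by auto
  then obtain a0 where a0: "a0 \<in> A" by auto
  have "\<forall>x\<in>B. dist_set_pt d A x \<le> d a0 x"
    unfolding dist_set_pt_def using cINF_lower[OF dpt_bdd(2)[OF q A] a0] by auto
  moreover have "\<forall>x\<in>B. d a0 x \<le> d a0 b + d b x"
    using qpm_facts[OF q] by metis
  moreover obtain R where "\<forall>x\<in>B. d b x \<le> R" using CB_bdd(1)[OF q B, of b] by (auto simp: bdd_above_def)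
  ultimately have "\<forall>x\<in>B. dist_set_pt d A x \<le> d a0 b + R" by (meson add_left_mono order_trans)
  then have bd: "bdd_above ((\<lambda>x. dist_set_pt d A x) ` B)" by (auto intro: bdd_aboveI2)
  have "dist_set_pt d A b \<le> Hqpm d A B"
    unfolding Hqpm_def using cSUP_upper[OF b bd] by linarith
  then have "(INF a\<in>A. d a b) < Hqpm d A B + e" using e unfolding dist_set_pt_def by linarith
  then show ?thesis using cINF_less_iff[OF Ane dpt_bdd(2)[OF q A]] by auto
qed


lemma se_imp:
  assumes q: "quasi_pseudometric d" and t0: "T0_qpm d" and FC: "F x \<in> CB d"
    and st: "startpoint d J F x" and en: "endpoint d J F x"
  shows "F x = {J x}"
proof -
  have ne: "F x \<noteq> {}" using CB_bdd(4)[OF q FC] .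
  have "\<forall>b\<in>F x. b = J x"
  proof
    fix b assume b: "b \<in> F x"
    have e1: "dist_set_pt d {J x} c = d (J x) c" for c unfolding dist_set_pt_def by simp
    have e2: "dist_pt_set d c {J x} = d c (J x)" for c unfolding dist_pt_set_def by simp
    have "d (J x) b \<le> (SUP c\<in>F x. dist_set_pt d {J x} c)"
      unfolding e1 using cSUP_upper[OF b CB_bdd(1)[OF q FC]] .
    also have "\<dots> \<le> 0" using st unfolding startpoint_def Hqpm_def by linarith
    finally have 1: "d (J x) b = 0" using qpm_facts(1)[OF q, of "J x" b] by linarith
    have "d b (J x) \<le> (SUP c\<in>F x. dist_pt_set d c {J x})"
      unfolding e2 using cSUP_upper[OF b CB_bdd(2)[OF q FC]] .
    also have "\<dots> \<le> 0" using en unfolding endpoint_def Hqpm_def by linarith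
    finally have 2: "d b (J x) = 0" using qpm_facts(1)[OF q, of b "J x"] by linarith
    show "b = J x" using t0 1 2 unfolding T0_qpm_def by blast
  qed
  then show ?thesis using ne by auto
qed

lemma single_se:
  assumes q: "quasi_pseudometric d" and "F x = {J x}"
  shows "startpoint d J F x" "endpoint d J F x"
  using assms qpm_facts(2)[OF q]
  by (simp_all add: startpoint_def endpoint_def Hqpm_def dist_pt_set_def dist_set_pt_def)

lemma cont_seq:
  assumes q: "quasi_pseudometric d" and c: "ds_continuous d J" and cv: "ds_converges d s x"
  shows "ds_converges d (\<lambda>n. J (s n)) (J x)"
  unfolding ds_converges_def
proof (intro allI impI)
  fix e :: real assume e: "e > 0"
  define U where "U = {y. sym_dist d (J x) y < e}"
  have "ds_open d U" unfolding ds_open_def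
  proof
    fix y assume "y \<in> U"
    then have y: "sym_dist d (J x) y < e" by (simp add: U_def)
    show "\<exists>e'>0. \<forall>z. sym_dist d y z < e' \<longrightarrow> z \<in> U"
    proof (intro exI[of _ "e - sym_dist d (J x) y"] conjI allI impI)
      show "e - sym_dist d (J x) y > 0" using y by simp
      fix z assume "sym_dist d y z < e - sym_dist d (J x) y"
      then show "z \<in> U" using sd_facts(6)[OF q, of "J x" z y] by (simp add: U_def)
    qed
  qed
  then have "ds_open d (J -` U)" using c unfolding ds_continuous_def by blast
  moreover have "x \<in> J -` U" using e sd_facts(5)[OF q] by (simp add: U_def)
  ultimately obtain \<delta> where \<delta>: "\<delta> > 0" "\<forall>y. sym_dist d x y < \<delta> \<longrightarrow> y \<in> J -` U"
    unfolding ds_open_def by blast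
  obtain N where N: "\<forall>n\<ge>N. sym_dist d (s n) x < \<delta>" using cv \<delta>(1) unfolding ds_converges_def by blast
  show "\<exists>N. \<forall>n\<ge>N. sym_dist d (J (s n)) (J x) < e"
  proof (intro exI allI impI)
    fix n assume "n \<ge> N"
    then have "sym_dist d x (s n) < \<delta>" using N sd_facts(1)[OF q] by metis
    then have "s n \<in> J -` U" using \<delta>(2) by blast
    then show "sym_dist d (J (s n)) (J x) < e" using sd_facts(1)[OF q] by (simp add: U_def)
  qed
qed


lemma cauchy_crit:
  assumes C: "C \<ge> 0" and b: "\<And>n m. sym_dist d (t n) (t m) \<le> C * (1 / real (Suc n) + 1 / real (Suc m))"
  shows "ds_cauchy d t"
  unfolding ds_cauchy_def
proof (intro allI impI)
  fix e :: real assume e: "e > 0"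
  obtain N where N: "2 * C / e < real (Suc N)" using reals_Archimedean2[of "2 * C / e"] by (metis lessI of_nat_less_iff order_less_trans)
  have N': "2 * C < e * real (Suc N)" using N e by (simp add: pos_divide_less_eq mult.commute)
  show "\<exists>N. \<forall>m\<ge>N. \<forall>n\<ge>N. sym_dist d (t m) (t n) < e"
  proof (intro exI allI impI)
    fix m n assume mn: "m \<ge> N" "n \<ge> N"
    have "1 / real (Suc m) \<le> 1 / real (Suc N)" "1 / real (Suc n) \<le> 1 / real (Suc N)"
      using mn by (simp_all add: frac_le)
    then have "C * (1 / real (Suc m) + 1 / real (Suc n)) \<le> C * (2 / real (Suc N))"
      using C by (intro mult_left_mono) auto
    also have "\<dots> < e" using N' by (simp add: divide_less_eq mult.commute)
    finally show "sym_dist d (t m) (t n) < e" using b[of m n] by linarith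
  qed
qed


lemma qpm_tri:
  fixes x y z
  assumes "quasi_pseudometric d"
  shows "d x z \<le> d x y + d y z"
  using assms unfolding quasi_pseudometric_def by auto

lemma existence:
  assumes q: "quasi_pseudometric d" and t0: "T0_qpm d"
    and comp: "\<forall>s. ds_cauchy d s \<longrightarrow> (\<exists>x. ds_converges d s x)"
    and c: "ds_continuous d J" and r: "r > 0"
    and hr: "\<forall>x y. r * d x y \<le> d (J x) (J y)"
    and FC: "\<forall>x. F x \<in> CB d"
    and HF: "\<forall>x y. Hqpm d (F x) (F y) \<le> \<alpha> * d (J x) (J y)"
    and a0: "0 < \<alpha>" and a1: "\<alpha> < 1"
    and amp: "approx_mix_point d J F"
  shows "\<exists>x. F x = {J x}"
proof -
  define M where "M x = (SUP y\<in>F x. sym_dist d (J x) y)" for x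
  have Mub: "sym_dist d (J x) y \<le> M x" if "y \<in> F x" for x y
    unfolding M_def using cSUP_upper[OF that CB_bdd(3)[OF q FC[rule_format, of x]]] .
  have M0: "0 \<le> M x" for x
  proof -
    obtain y where "y \<in> F x" using CB_bdd(4)[OF q FC[rule_format, of x]] by auto
    then show ?thesis using Mub sd_facts(4)[OF q] order_trans by blast
  qed
  have inf0: "(INF x. M x) = 0" using amp unfolding approx_mix_point_def M_def .
  have "\<forall>n::nat. \<exists>x. M x < 1 / real (Suc n)"
  proof
    fix n :: nat
    have "(INF x. M x) < 1 / real (Suc n)" using inf0 by simp
    moreover have "bdd_below (range M)" using M0 unfolding bdd_below_def by blast
    ultimately show "\<exists>x. M x < 1 / real (Suc n)" using cINF_less_iff[of UNIV M] by auto
  qed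
  then obtain s where s: "\<And>n. M (s n) < 1 / real (Suc n)" by metis
  have sm1: "d (J (s n)) y < 1 / real (Suc n)" and sm2: "d y (J (s n)) < 1 / real (Suc n)"
    if "y \<in> F (s n)" for n y
    using Mub[OF that] s[of n] unfolding sym_dist_def by linarith+
  have key: "d (J (s n)) (J (s m)) \<le> (1 / (1 - \<alpha>)) * (1 / real (Suc n) + 1 / real (Suc m))" for n m
  proof -
    let ?D = "d (J (s n)) (J (s m))"
    let ?a = "1 / real (Suc n) + 1 / real (Suc m)"
    obtain y where y: "y \<in> F (s n)" using CB_bdd(4)[OF q FC[rule_format, of "s n"]] by auto
    have "(1 - \<alpha>) * ?D \<le> ?a + e" if e: "e > 0" for e
    proof -
      obtain z where z: "z \<in> F (s m)" "d y z < Hqpm d (F (s n)) (F (s m)) + e"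
        using H1[OF q FC[rule_format] FC[rule_format] y e] by blast
      have "?D \<le> d (J (s n)) y + d y z + d z (J (s m))"
        using qpm_tri[OF q, where x="J (s n)" and y=y and z="J (s m)"] qpm_tri[OF q, where x=y and y=z and z="J (s m)"] by linarith
      moreover have "Hqpm d (F (s n)) (F (s m)) \<le> \<alpha> * ?D" using HF by blast
      ultimately show ?thesis using sm1[OF y] sm2[OF z(1)] z(2) by (simp add: algebra_simps)
    qed
    then have "(1 - \<alpha>) * ?D \<le> ?a" using field_le_epsilon by blast
    then have "?D \<le> ?a / (1 - \<alpha>)" using a1 by (simp add: pos_le_divide_eq mult.commute)
    then show ?thesis by simp
  qed
  define C where "C = 1 / (1 - \<alpha>)"
  have C0: "C \<ge> 0" using a1 by (simp add: C_def)
  have keys: "sym_dist d (J (s n)) (J (s m)) \<le> C * (1 / real (Suc n) + 1 / real (Suc m))" for n m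
    using key[of n m] key[of m n] unfolding sym_dist_def C_def by (simp add: add.commute)
  have "ds_cauchy d s"
  proof (rule cauchy_crit[of "C / r"])
    show "C / r \<ge> 0" using C0 r by simp
    fix n m
    have "r * sym_dist d (s n) (s m) \<le> sym_dist d (J (s n)) (J (s m))"
    proof -
      have "r * d (s n) (s m) \<le> d (J (s n)) (J (s m))" "r * d (s m) (s n) \<le> d (J (s m)) (J (s n))" using hr by auto
      then show ?thesis unfolding sym_dist_def max_def by (split if_split)+ linarith
    qed
    then have "r * sym_dist d (s n) (s m) \<le> C * (1 / real (Suc n) + 1 / real (Suc m))"
      using keys[of n m] by linarith
    then have "sym_dist d (s n) (s m) \<le> C * (1 / real (Suc n) + 1 / real (Suc m)) / r"
      using r by (simp add: pos_le_divide_eq mult.commute)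
    then show "sym_dist d (s n) (s m) \<le> C / r * (1 / real (Suc n) + 1 / real (Suc m))"
      by simp
  qed
  then obtain x where x: "ds_converges d s x" using comp by blast
  have Jx: "ds_converges d (\<lambda>n. J (s n)) (J x)" using cont_seq[OF q c x] .
  have pick: "\<exists>n. sym_dist d (J (s n)) (J x) < \<delta> \<and> 1 / real (Suc n) < \<delta>" if \<delta>0: "\<delta> > 0" for \<delta>
  proof -
    obtain N1 where N1: "\<forall>n\<ge>N1. sym_dist d (J (s n)) (J x) < \<delta>" using Jx \<delta>0 unfolding ds_converges_def by blast
    obtain N2 where N2: "1 / \<delta> < real N2" using reals_Archimedean2 by blast
    let ?n = "max N1 N2"
    have "1 / \<delta> < real (Suc ?n)" using N2 by (simp add: less_le_trans)
    then have "1 / real (Suc ?n) < \<delta>" using \<delta>0 by (simp add: field_simps)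
    then show ?thesis using N1 by (intro exI[of _ ?n]) auto
  qed
  have hb: "\<alpha> * d (J (s n)) (J x) \<le> sym_dist d (J (s n)) (J x)"
     "\<alpha> * d (J x) (J (s n)) \<le> sym_dist d (J (s n)) (J x)" for n
  proof -
    have "\<alpha> * d (J (s n)) (J x) \<le> d (J (s n)) (J x)" using a1 qpm_facts(1)[OF q] by (simp add: mult_left_le_one_le a0 less_imp_le)
    then show "\<alpha> * d (J (s n)) (J x) \<le> sym_dist d (J (s n)) (J x)" using sd_facts(2)[OF q] order_trans by blast
    have "\<alpha> * d (J x) (J (s n)) \<le> d (J x) (J (s n))" using a1 qpm_facts(1)[OF q] by (simp add: mult_left_le_one_le a0 less_imp_le)
    then show "\<alpha> * d (J x) (J (s n)) \<le> sym_dist d (J (s n)) (J x)" using sd_facts(3)[OF q] order_trans by blast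
  qed
  have "\<forall>b\<in>F x. b = J x"
  proof
    fix b assume b: "b \<in> F x"
    have "d (J x) b \<le> 0 + \<epsilon>" if \<epsilon>: "\<epsilon> > 0" for \<epsilon>
    proof -
      obtain n where n: "sym_dist d (J (s n)) (J x) < \<epsilon>/4" "1 / real (Suc n) < \<epsilon>/4" using pick \<epsilon> by (meson zero_less_divide_iff zero_less_numeral)
      obtain y where y: "y \<in> F (s n)" "d y b < Hqpm d (F (s n)) (F x) + \<epsilon>/4"
        using H2[OF q FC[rule_format] FC[rule_format] b, of "\<epsilon>/4" "s n"] \<epsilon> by auto
      have "d (J x) b \<le> d (J x) (J (s n)) + d (J (s n)) y + d y b"
        using qpm_tri[OF q, where x="J x" and y="J (s n)" and z=b] qpm_tri[OF q, where x="J (s n)" and y=y and z=b] by linarith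
      moreover have "Hqpm d (F (s n)) (F x) \<le> \<alpha> * d (J (s n)) (J x)" using HF by blast
      moreover have "d (J x) (J (s n)) \<le> sym_dist d (J (s n)) (J x)" using sd_facts(3)[OF q] by blast
      ultimately show ?thesis using sm1[OF y(1)] y(2) hb(1)[of n] n by linarith
    qed
    then have 1: "d (J x) b = 0" using field_le_epsilon[of "d (J x) b" 0] qpm_facts(1)[OF q, of "J x" b] by (meson order_antisym)
    have "d b (J x) \<le> 0 + \<epsilon>" if \<epsilon>: "\<epsilon> > 0" for \<epsilon>
    proof -
      obtain n where n: "sym_dist d (J (s n)) (J x) < \<epsilon>/4" "1 / real (Suc n) < \<epsilon>/4" using pick \<epsilon> by (meson zero_less_divide_iff zero_less_numeral)
      obtain z where z: "z \<in> F (s n)" "d b z < Hqpm d (F x) (F (s n)) + \<epsilon>/4"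
        using H1[OF q FC[rule_format] FC[rule_format] b, of "\<epsilon>/4" "s n"] \<epsilon> by auto
      have "d b (J x) \<le> d b z + d z (J (s n)) + d (J (s n)) (J x)"
        using qpm_tri[OF q, where x=b and y=z and z="J x"] qpm_tri[OF q, where x=z and y="J (s n)" and z="J x"] by linarith
      moreover have "Hqpm d (F x) (F (s n)) \<le> \<alpha> * d (J x) (J (s n))" using HF by blast
      moreover have "d (J (s n)) (J x) \<le> sym_dist d (J (s n)) (J x)" using sd_facts(2)[OF q] by blast
      ultimately show ?thesis using sm2[OF z(1)] z(2) hb(2)[of n] n by linarith
    qed
    then have 2: "d b (J x) = 0" using field_le_epsilon[of "d b (J x)" 0] qpm_facts(1)[OF q, of b "J x"] by (meson order_antisym)
    show "b = J x" using t0 1 2 unfolding T0_qpm_def by blast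
  qed
  then show ?thesis using CB_bdd(4)[OF q FC[rule_format, of x]] by auto
qed


theorem mainTheorem4:
  fixes d :: "'a \<Rightarrow> 'a \<Rightarrow> real" and J :: "'a \<Rightarrow> 'a" and F :: "'a \<Rightarrow> 'a set"
    and r \<alpha> :: real
  assumes "bicomplete d"
    and "ds_continuous d J"
    and "r > 0"
    and "\<forall>x y. r * d x y \<le> d (J x) (J y)"
    and "\<forall>x. F x \<in> CB d"
    and "\<forall>x y. Hqpm d (F x) (F y) \<le> \<alpha> * d (J x) (J y)"
    and "0 < \<alpha>" and "\<alpha> < 1" and "r * \<alpha> < 1"
  shows "(\<exists>!x0. startpoint d J F x0 \<and> endpoint d J F x0) \<longleftrightarrow> approx_mix_point d J F"
proof -
  have q: "quasi_pseudometric d" and t0: "T0_qpm d"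
    and comp: "\<forall>s. ds_cauchy d s \<longrightarrow> (\<exists>x. ds_converges d s x)"
    using assms(1) unfolding bicomplete_def by auto
  have FC: "\<And>x. F x \<in> CB d" using assms(5) by blast
  have uniq: "x = y" if "F x = {J x}" "F y = {J y}" for x y
  proof -
    have e: "Hqpm d {J u} {J v} = d (J u) (J v)" for u v
      by (simp add: Hqpm_def dist_pt_set_def dist_set_pt_def)
    have h: "d (J u) (J v) = 0" if "F u = {J u}" "F v = {J v}" for u v
    proof -
      have "d (J u) (J v) \<le> \<alpha> * d (J u) (J v)"
        using assms(6)[rule_format, of u v] that e[of u v] by simp
      then have "(1 - \<alpha>) * d (J u) (J v) \<le> 0" by (simp add: algebra_simps)
      then have "d (J u) (J v) \<le> 0" using assms(8) by (simp add: mult_le_0_iff)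
      then show ?thesis using qpm_facts(1)[OF q, of "J u" "J v"] by linarith
    qed
    have "d (J x) (J y) = 0" "d (J y) (J x) = 0" using h that by blast+
    then have J: "J x = J y" using t0 unfolding T0_qpm_def by blast
    have "r * d x y \<le> 0" "r * d y x \<le> 0"
      using assms(4)[rule_format, of x y] assms(4)[rule_format, of y x] J qpm_facts(2)[OF q, of "J x"] by simp_all
    then have "d x y \<le> 0" "d y x \<le> 0" using assms(3) by (simp_all add: mult_le_0_iff)
    then have "d x y = 0" "d y x = 0" using qpm_facts(1)[OF q] by (meson order_antisym)+
    then show ?thesis using t0 unfolding T0_qpm_def by blast
  qed
  show ?thesis
  proof
    assume "\<exists>!x0. startpoint d J F x0 \<and> endpoint d J F x0"
    then obtain x0 where "startpoint d J F x0" "endpoint d J F x0" by blast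
    then have F0: "F x0 = {J x0}" using se_imp[OF q t0, where F=F] FC by blast
    define M where "M x = (SUP y\<in>F x. sym_dist d (J x) y)" for x
    have M0: "0 \<le> M x" for x
    proof -
      obtain y where y: "y \<in> F x" using CB_bdd(4)[OF q FC[of x]] by auto
      have "sym_dist d (J x) y \<le> M x"
        unfolding M_def using cSUP_upper[OF y CB_bdd(3)[OF q FC[of x]]] .
      then show ?thesis using sd_facts(4)[OF q] order_trans by blast
    qed
    have Mx0: "M x0 = 0" unfolding M_def F0 using sd_facts(5)[OF q] by simp
    have "(INF x. M x) \<le> 0" using cINF_lower[of M UNIV x0] M0 Mx0 unfolding bdd_below_def by auto
    moreover have "(INF x. M x) \<ge> 0" using M0 by (intro cINF_greatest) auto
    ultimately show "approx_mix_point d J F" unfolding approx_mix_point_def M_def by linarith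
  next
    assume "approx_mix_point d J F"
    then obtain x where x: "F x = {J x}"
      using existence[OF q t0 comp assms(2,3,4,5,6,7,8)] by blast
    show "\<exists>!x0. startpoint d J F x0 \<and> endpoint d J F x0"
    proof (rule ex1I[of _ x])
      show "startpoint d J F x \<and> endpoint d J F x" using single_se[OF q, where F=F and J=J and x=x] x by blast
      fix y assume "startpoint d J F y \<and> endpoint d J F y"
      then have "F y = {J y}" using se_imp[OF q t0, where F=F] FC by blast
      then show "y = x" using uniq x by blast
    qed
  qed
qed

end
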